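(* Let $B\ge1$, $h\ge2$ be integers and $\Delta\ge 2$ an even integer. (1) There is a network (graph of maximum degree at most $\Delta$) with $\Theta(\Delta^h)$ nodes, together with an instance of the $B$-bit $h$-hop simulation problem on it, such that any (possibly randomized) Beeping Network algorithm that terminates within $\frac12 B(\Delta-1)^{h-2}(\Delta/2)^3$ rounds outputs the correct result with probability at most $2^{-\frac12 B(\Delta-1)^{h-2}(\Delta/2)^3}=2^{-\Theta(B\Delta^{h+1})}$; in particular, any $B$-bit $h$-hop simulation algorithm requires $\Omega(B\Delta^{h+1})$ beeping rounds to succeed with probability more than $2^{-\frac12 B(\Delta-1)^{h-2}(\Delta/2)^3}$. (2) There is a network of maximum degree at most $\Delta$ with $\Theta(\Delta^h)$ nodes, together with an instance of $B$-bit $h$-hop Local Broadcast on it, such that any (possibly randomized) algorithm that terminates within $\frac12 B(\Delta-1)^{h-2}(\Delta/2)^2$ rounds succeeds with probability at most $2^{-\frac12 B(\Delta-1)^{h-2}(\Delta/2)^2}=2^{-\Theta(B\Delta^{h})}$; in particular, any $B$-bit $h$-hop Local Broadcast algorithm requires $\Omega(B\Delta^{h})$ beeping rounds to succeed with probability more than that.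
   Context: A Beeping Network is a network of $n$ nodes with unique IDs whose topology is an undirected graph $G=(V,E)$. Time is divided into synchronous rounds and all nodes start simultaneously. In each round every node either beeps or listens; a listening node hears "silence" if no neighbor beeps and "noise" if at least one neighbor beeps, and cannot distinguish one beep from several. Nodes may use private randomness. $B$-bit $h$-hop simulation: each node holds messages (possibly different for different destinations) of at most $B$ bits addressed to other nodes, and must deliver each such message to its destination whenever the destination is within distance $h$ (hops) of the source. $B$-bit $h$-hop Local Broadcast: each node holds a single message of at most $B$ bits that must be delivered to all nodes within distance $h$ of it. *)

theory Defs
  imports "HOL-Probability.Product_PMF"
begin

definition network :: "nat set \<Rightarrow> (nat \<Rightarrow> nat \<Rightarrow> bool) \<Rightarrow> bool" where
  "network V E \<longleftrightarrow> finite V \<and> (\<forall>u w. E u w \<longrightarrow> u \<in> V \<and> w \<in> V \<and> u \<noteq> w \<and> E w u)"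

definition max_degree_le :: "nat set \<Rightarrow> (nat \<Rightarrow> nat \<Rightarrow> bool) \<Rightarrow> nat \<Rightarrow> bool" where
  "max_degree_le V E D \<longleftrightarrow> (\<forall>v\<in>V. card {u\<in>V. E v u} \<le> D)"

definition within_dist :: "(nat \<Rightarrow> nat \<Rightarrow> bool) \<Rightarrow> nat \<Rightarrow> nat \<Rightarrow> nat \<Rightarrow> bool" where
  "within_dist E k u w \<longleftrightarrow> (\<exists>j\<le>k. (u, w) \<in> {(a, b). E a b} ^^ j)"

text \<open>Node v draws a private random seed from coins v (independently
  of the other nodes); in every round it beeps or listens as a function of its
  ID, its input, its seed and its history of observations; after the last round
  it produces its output from the same data.\<close>
record ('i, 'o) beep_alg =
  coins :: "nat \<Rightarrow> nat pmf"
  act   :: "nat \<Rightarrow> 'i \<Rightarrow> nat \<Rightarrow> bool list \<Rightarrow> bool"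
  outp  :: "nat \<Rightarrow> 'i \<Rightarrow> nat \<Rightarrow> bool list \<Rightarrow> 'o"

text \<open>A listening node hears noise iff some neighbour beeps;
  a beeping node hears nothing (recorded as False).\<close>
fun hist :: "nat set \<Rightarrow> (nat \<Rightarrow> nat \<Rightarrow> bool) \<Rightarrow> (nat \<Rightarrow> bool list \<Rightarrow> bool)
             \<Rightarrow> nat \<Rightarrow> nat \<Rightarrow> bool list" where
  "hist V E b 0 v = []"
| "hist V E b (Suc t) v = hist V E b t v @
     [\<not> b v (hist V E b t v) \<and> (\<exists>u\<in>V. E v u \<and> b u (hist V E b t u))]"

definition outcome :: "('i, 'o) beep_alg \<Rightarrow> nat set \<Rightarrow> (nat \<Rightarrow> nat \<Rightarrow> bool)
     \<Rightarrow> (nat \<Rightarrow> 'i) \<Rightarrow> nat \<Rightarrow> (nat \<Rightarrow> nat) \<Rightarrow> nat \<Rightarrow> 'o" where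
  "outcome A V E inp T \<sigma> v =
     outp A v (inp v) (\<sigma> v) (hist V E (\<lambda>u hs. act A u (inp u) (\<sigma> u) hs) T v)"

definition success_prob :: "('i, 'o) beep_alg \<Rightarrow> nat set \<Rightarrow> (nat \<Rightarrow> nat \<Rightarrow> bool)
     \<Rightarrow> (nat \<Rightarrow> 'i) \<Rightarrow> nat \<Rightarrow> ((nat \<Rightarrow> 'o) \<Rightarrow> bool) \<Rightarrow> real" where
  "success_prob A V E inp T ok =
     measure_pmf.prob (Pi_pmf V 0 (coins A)) {\<sigma>. ok (outcome A V E inp T \<sigma>)}"

text \<open>Node u's input: its messages indexed by destination.\<close>
definition sim_pairs_ok :: "nat set \<Rightarrow> (nat \<Rightarrow> nat \<Rightarrow> bool) \<Rightarrow> nat \<Rightarrow> (nat \<times> nat) set \<Rightarrow> bool" where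
  "sim_pairs_ok V E h P \<longleftrightarrow>
     (\<forall>(u, w)\<in>P. u \<in> V \<and> w \<in> V \<and> u \<noteq> w \<and> within_dist E h u w)"

definition sim_input :: "(nat \<times> nat) set \<Rightarrow> (nat \<Rightarrow> nat \<Rightarrow> bool list) \<Rightarrow> nat \<Rightarrow> nat \<Rightarrow> bool list" where
  "sim_input P m u = (\<lambda>w. if (u, w) \<in> P then m u w else [])"

definition sim_correct :: "(nat \<times> nat) set \<Rightarrow> (nat \<Rightarrow> nat \<Rightarrow> bool list)
     \<Rightarrow> (nat \<Rightarrow> nat \<Rightarrow> bool list) \<Rightarrow> bool" where
  "sim_correct P m out \<longleftrightarrow> (\<forall>(u, w)\<in>P. out w u = m u w)"

definition lb_correct :: "nat set \<Rightarrow> (nat \<Rightarrow> nat \<Rightarrow> bool) \<Rightarrow> nat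
     \<Rightarrow> (nat \<Rightarrow> bool list) \<Rightarrow> (nat \<Rightarrow> nat \<Rightarrow> bool list) \<Rightarrow> bool" where
  "lb_correct V E h m out \<longleftrightarrow>
     (\<forall>u\<in>V. \<forall>w\<in>V. u \<noteq> w \<and> within_dist E h u w \<longrightarrow> out w u = m u)"

end

theory Submission
  imports Defs "HOL-Library.Countable"
begin


lemma hist_agree:
  assumes nb: "\<forall>y\<in>Y. \<forall>u\<in>V. E y u \<longleftrightarrow> u \<in> S" and SV: "S \<subseteq> V"
    and bY: "\<forall>y\<in>Y. b y = b' y"
    and o: "\<forall>t<T. (\<exists>u\<in>S. b u (hist V E b t u)) = (\<exists>u\<in>S. b' u (hist V E b' t u))"
  shows "t \<le> T \<Longrightarrow> \<forall>y\<in>Y. hist V E b t y = hist V E b' t y"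
proof (induction t)
  case 0 then show ?case by simp
next
  case (Suc t)
  then have IH: "\<forall>y\<in>Y. hist V E b t y = hist V E b' t y" by simp
  show ?case
  proof
    fix y assume y: "y \<in> Y"
    have e1: "(\<exists>u\<in>V. E y u \<and> b u (hist V E b t u)) = (\<exists>u\<in>S. b u (hist V E b t u))"
      using nb y SV by blast
    have e2: "(\<exists>u\<in>V. E y u \<and> b' u (hist V E b' t u)) = (\<exists>u\<in>S. b' u (hist V E b' t u))"
      using nb y SV by blast
    have "t < T" using Suc by simp
    then show "hist V E b (Suc t) y = hist V E b' (Suc t) y"
      using IH y bY e1 e2 o by simp
  qed
qed

lemma card_bool_lists: "card {xs :: bool list. length xs = n} = 2 ^ n"
  using card_lists_length_eq[of "UNIV :: bool set" n] by simp

lemma finite_bool_lists: "finite {xs :: bool list. length xs = n}"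
  using finite_lists_length_eq[of "UNIV :: bool set" n] by simp

lemma main_bound:
  fixes A :: "('i, 'o) beep_alg" and G :: "'g set" and inp :: "'g \<Rightarrow> nat \<Rightarrow> 'i"
    and ok :: "'g \<Rightarrow> (nat \<Rightarrow> 'o) \<Rightarrow> bool"
  assumes fin: "finite G" and ne: "G \<noteq> {}"
    and nb: "\<forall>y\<in>Y. \<forall>u\<in>V. E y u \<longleftrightarrow> u \<in> S" and SV: "S \<subseteq> V"
    and inY: "\<forall>g\<in>G. \<forall>g'\<in>G. \<forall>y\<in>Y. inp g y = inp g' y"
    and inj: "\<forall>g\<in>G. \<forall>g'\<in>G. \<forall>out out'. ok g out \<longrightarrow> ok g' out' \<longrightarrow> (\<forall>y\<in>Y. out y = out' y) \<longrightarrow> g = g'"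
  shows "\<exists>g\<in>G. success_prob A V E (inp g) T (ok g) \<le> 2 ^ T / card G"
proof -
  define p where "p = Pi_pmf V 0 (coins A)"
  define Ag where "Ag g = {\<sigma>. ok g (outcome A V E (inp g) T \<sigma>)}" for g
  define bb where "bb g \<sigma> = (\<lambda>u hs. act A u (inp g u) (\<sigma> u) hs)" for g \<sigma>
  define obsq where "obsq g \<sigma> = map (\<lambda>t. \<exists>u\<in>S. bb g \<sigma> u (hist V E (bb g \<sigma>) t u)) [0..<T]" for g \<sigma>
  have cardpt: "card {g\<in>G. \<sigma> \<in> Ag g} \<le> 2 ^ T" for \<sigma>
  proof -
    have "inj_on (\<lambda>g. obsq g \<sigma>) {g\<in>G. \<sigma> \<in> Ag g}"
    proof (rule inj_onI)
      fix g g' assume g: "g \<in> {g\<in>G. \<sigma> \<in> Ag g}" and g': "g' \<in> {g\<in>G. \<sigma> \<in> Ag g}"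
        and eq: "obsq g \<sigma> = obsq g' \<sigma>"
      have o: "\<forall>t<T. (\<exists>u\<in>S. bb g \<sigma> u (hist V E (bb g \<sigma>) t u)) = (\<exists>u\<in>S. bb g' \<sigma> u (hist V E (bb g' \<sigma>) t u))"
      proof (intro allI impI)
        fix t assume "t < T"
        then show "(\<exists>u\<in>S. bb g \<sigma> u (hist V E (bb g \<sigma>) t u)) = (\<exists>u\<in>S. bb g' \<sigma> u (hist V E (bb g' \<sigma>) t u))"
          using arg_cong[OF eq, of "\<lambda>xs. xs ! t"] by (simp add: obsq_def)
      qed
      have bY: "\<forall>y\<in>Y. bb g \<sigma> y = bb g' \<sigma> y"
      proof
        fix y assume "y \<in> Y"
        then have "inp g y = inp g' y" using inY g g' by blast
        then show "bb g \<sigma> y = bb g' \<sigma> y" by (simp add: bb_def)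
      qed
      have H: "\<forall>y\<in>Y. hist V E (bb g \<sigma>) T y = hist V E (bb g' \<sigma>) T y"
        using hist_agree[OF nb SV bY o] by simp
      have "\<forall>y\<in>Y. outcome A V E (inp g) T \<sigma> y = outcome A V E (inp g') T \<sigma> y"
      proof
        fix y assume y: "y \<in> Y"
        then have "inp g y = inp g' y" using inY g g' by blast
        then show "outcome A V E (inp g) T \<sigma> y = outcome A V E (inp g') T \<sigma> y"
          using H y by (simp add: outcome_def bb_def)
      qed
      then show "g = g'" using inj g g' by (auto simp: Ag_def)
    qed
    moreover have "(\<lambda>g. obsq g \<sigma>) ` {g\<in>G. \<sigma> \<in> Ag g} \<subseteq> {xs. length xs = T}"
      by (auto simp: obsq_def)
    ultimately have "card {g\<in>G. \<sigma> \<in> Ag g} \<le> card {xs :: bool list. length xs = T}"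
      using card_inj_on_le finite_bool_lists by blast
    then show ?thesis using card_bool_lists by simp
  qed
  have int: "integrable (measure_pmf p) (indicator (Ag g) :: _ \<Rightarrow> real)" for g
    by (rule integrable_real_indicator) (auto simp: less_top[symmetric])
  have "(\<Sum>g\<in>G. measure_pmf.prob p (Ag g)) = (\<Sum>g\<in>G. measure_pmf.expectation p (indicator (Ag g)))"
    by simp
  also have "\<dots> = measure_pmf.expectation p (\<lambda>\<sigma>. \<Sum>g\<in>G. indicator (Ag g) \<sigma>)"
    using Bochner_Integration.integral_sum[where I=G and M="measure_pmf p" and f="\<lambda>g \<sigma>. indicator (Ag g) \<sigma> :: real"] int by simp
  also have "\<dots> \<le> 2 ^ T"
  proof (rule measure_pmf.integral_le_const)
    show "integrable (measure_pmf p) (\<lambda>\<sigma>. \<Sum>g\<in>G. indicator (Ag g) \<sigma> :: real)"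
      using int by auto
    show "AE \<sigma> in measure_pmf p. (\<Sum>g\<in>G. indicator (Ag g) \<sigma>) \<le> (2::real) ^ T"
    proof (rule AE_I2)
      fix \<sigma>
      have "(\<Sum>g\<in>G. indicator (Ag g) \<sigma> :: real) = real (card {g\<in>G. \<sigma> \<in> Ag g})"
        using fin by (simp add: indicator_def sum.If_cases Int_def)
      also have "\<dots> \<le> 2 ^ T" using cardpt[of \<sigma>]
        by (metis of_nat_le_iff of_nat_numeral of_nat_power)
      finally show "(\<Sum>g\<in>G. indicator (Ag g) \<sigma>) \<le> (2::real) ^ T" .
    qed
  qed
  finally have sumle: "(\<Sum>g\<in>G. measure_pmf.prob p (Ag g)) \<le> 2 ^ T" .
  show ?thesis
  proof (rule ccontr)
    assume "\<not> ?thesis"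
    then have "\<forall>g\<in>G. 2 ^ T / card G < measure_pmf.prob p (Ag g)"
      by (auto simp: success_prob_def p_def Ag_def not_le)
    then have "(\<Sum>g\<in>G. 2 ^ T / card G) < (\<Sum>g\<in>G. measure_pmf.prob p (Ag g))"
      using fin ne by (intro sum_strict_mono) auto
    moreover have "(\<Sum>g\<in>G. (2::real) ^ T / card G) = 2 ^ T" using fin ne by simp
    ultimately show False using sumle by simp
  qed
qed



definition validp :: "nat \<Rightarrow> nat list \<Rightarrow> bool" where
  "validp d p \<longleftrightarrow> p = [] \<or> (hd p < d \<and> (\<forall>x\<in>set (tl p). x < 2*d-1))"
definition Rnodes :: "nat \<Rightarrow> nat list set" where "Rnodes d = {[0, r] | r. r < d}"
definition Lnodes :: "nat \<Rightarrow> nat list set" where "Lnodes d = {[1, l] | l. l < d}"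
definition Tnodes :: "nat \<Rightarrow> nat \<Rightarrow> nat list set" where
  "Tnodes d h = {1#l#p | l p. l < d \<and> length p \<le> h-1 \<and> validp d p}"
definition Vl :: "nat \<Rightarrow> nat \<Rightarrow> nat list set" where "Vl d h = Rnodes d \<union> Tnodes d h"
definition El :: "nat \<Rightarrow> nat \<Rightarrow> nat list \<Rightarrow> nat list \<Rightarrow> bool" where
  "El d h x y \<longleftrightarrow> (x \<in> Rnodes d \<and> y \<in> Lnodes d) \<or> (y \<in> Rnodes d \<and> x \<in> Lnodes d) \<or>
     (x \<in> Tnodes d h \<and> y \<in> Tnodes d h \<and> (\<exists>c. y = x@[c] \<or> x = y@[c]))"
definition Lf :: "nat \<Rightarrow> nat \<Rightarrow> nat list set" where
  "Lf d h = (\<lambda>(l,c,q). 1#l#c#q) ` ({..<d} \<times> {..<d} \<times> {q. set q \<subseteq> {..<2*d-1} \<and> length q = h-2})"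
definition Vn :: "nat \<Rightarrow> nat \<Rightarrow> nat set" where "Vn d h = to_nat ` Vl d h"
definition En :: "nat \<Rightarrow> nat \<Rightarrow> nat \<Rightarrow> nat \<Rightarrow> bool" where
  "En d h a b \<longleftrightarrow> (\<exists>x y. a = to_nat x \<and> b = to_nat y \<and> El d h x y)"

lemma Ln_sub: "h \<ge> 1 \<Longrightarrow> Lnodes d \<subseteq> Tnodes d h"
  by (auto simp: Lnodes_def Tnodes_def validp_def)

lemma Rn_Tn_disj: "x \<in> Rnodes d \<Longrightarrow> x \<notin> Tnodes d h"
  by (auto simp: Rnodes_def Tnodes_def)

lemma Tn_len: "x \<in> Tnodes d h \<Longrightarrow> length x \<ge> 2 \<and> hd x = 1"
  by (auto simp: Tnodes_def)

lemma El_sym: "El d h x y \<Longrightarrow> El d h y x"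
  by (auto simp: El_def)

lemma El_V: "h \<ge> 1 \<Longrightarrow> El d h x y \<Longrightarrow> x \<in> Vl d h \<and> y \<in> Vl d h \<and> x \<noteq> y"
  using Ln_sub[of h d] by (auto simp: El_def Vl_def Rnodes_def Lnodes_def)

lemma En_iff: "En d h (to_nat x) (to_nat y) \<longleftrightarrow> El d h x y"
  by (simp add: En_def)

lemma Tn_sub: "Tnodes d h \<subseteq> (\<lambda>(l,p). 1#l#p) ` ({..<d} \<times> {p. set p \<subseteq> {..<2*d} \<and> length p \<le> h-1})"
proof
  fix x assume "x \<in> Tnodes d h"
  then obtain l p where x: "x = 1#l#p" "l < d" "length p \<le> h-1" "validp d p"
    by (auto simp: Tnodes_def)
  have "set p \<subseteq> {..<2*d}"
  proof (cases p)
    case Nil then show ?thesis by simp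
  next
    case (Cons a q) then show ?thesis using x(4) by (auto simp: validp_def)
  qed
  then show "x \<in> (\<lambda>(l,p). 1#l#p) ` ({..<d} \<times> {p. set p \<subseteq> {..<2*d} \<and> length p \<le> h-1})"
    using x by (auto intro!: image_eqI[where x="(l,p)"])
qed

lemma finite_Vl: "finite (Vl d h)"
proof -
  have "finite (Rnodes d)" unfolding Rnodes_def
    using finite_imageI[of "{..<d}" "\<lambda>r. [0,r]"] by (simp add: image_def)
  moreover have "finite (Tnodes d h)"
    by (rule finite_subset[OF Tn_sub]) (auto intro!: finite_imageI finite_lists_length_le)
  ultimately show ?thesis by (simp add: Vl_def)
qed

lemma card_Rn: "card (Rnodes d) \<le> d"
proof -
  have "Rnodes d = (\<lambda>r. [0,r]) ` {..<d}" by (auto simp: Rnodes_def)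
  then show ?thesis using card_image_le[of "{..<d}" "\<lambda>r. [0,r]"] by simp
qed

lemma card_Ln: "card (Lnodes d) \<le> d"
proof -
  have "Lnodes d = (\<lambda>r. [1,r]) ` {..<d}" by (auto simp: Lnodes_def)
  then show ?thesis using card_image_le[of "{..<d}" "\<lambda>r. [1,r]"] by simp
qed

lemma card_Tn: "d \<ge> 1 \<Longrightarrow> h \<ge> 1 \<Longrightarrow> card (Tnodes d h) \<le> d * (h * (2*d)^(h-1))"
proof -
  assume "d \<ge> 1" "h \<ge> 1" 
  let ?S = "{p. set p \<subseteq> {..<2*d} \<and> length p \<le> h-1}"
  have "card (Tnodes d h) \<le> card ((\<lambda>(l,p). 1#l#p) ` ({..<d} \<times> ?S))"
    by (rule card_mono[OF _ Tn_sub]) (auto intro!: finite_imageI finite_lists_length_le)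
  also have "\<dots> \<le> card ({..<d} \<times> ?S)" by (rule card_image_le) (auto intro!: finite_lists_length_le)
  also have "\<dots> = d * card ?S" by (simp add: card_cartesian_product)
  also have "card ?S = (\<Sum>i\<le>h-1. (2*d)^i)" by (simp add: card_lists_length_le)
  also have "\<dots> \<le> (\<Sum>i\<le>h-1. (2*d)^(h-1))"
  proof (rule sum_mono)
    fix i assume "i \<in> {..h-1}"
    then show "(2*d)^i \<le> (2*d)^(h-1)"
      using \<open>d \<ge> 1\<close> by (intro power_increasing) auto
  qed
  finally show ?thesis using \<open>h \<ge> 1\<close> by simp
qed

lemma Lf_sub: "h \<ge> 2 \<Longrightarrow> Lf d h \<subseteq> Tnodes d h"
  by (auto simp: Lf_def Tnodes_def validp_def)

lemma card_Lf: "card (Lf d h) = d * (d * (2*d-1)^(h-2))"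
proof -
  have "inj_on (\<lambda>(l,c,q). 1#l#c#(q::nat list)) ({..<d} \<times> {..<d} \<times> {q. set q \<subseteq> {..<2*d-1} \<and> length q = h-2})"
    by (auto simp: inj_on_def)
  then show ?thesis unfolding Lf_def
    by (simp add: card_image card_cartesian_product card_lists_length_eq)
qed



lemma nbr_Rn: "x \<in> Rnodes d \<Longrightarrow> {y. El d h x y} \<subseteq> Lnodes d"
  by (auto simp: El_def Rnodes_def Tnodes_def Lnodes_def)

lemma nbr_L: "x \<in> Lnodes d \<Longrightarrow> {y. El d h x y} \<subseteq> Rnodes d \<union> (\<lambda>c. x@[c]) ` {..<d}"
proof
  fix y assume x: "x \<in> Lnodes d" and y: "y \<in> {y. El d h x y}"
  then obtain l where l: "x = [1,l]" "l < d" by (auto simp: Lnodes_def)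
  show "y \<in> Rnodes d \<union> (\<lambda>c. x@[c]) ` {..<d}"
  proof (cases "y \<in> Rnodes d")
    case True then show ?thesis by simp
  next
    case False
    then have "y \<in> Tnodes d h" "\<exists>c. y = x@[c] \<or> x = y@[c]" using y x by (auto simp: El_def Rnodes_def Lnodes_def)
    then obtain c where "y = x@[c]" using Tn_len[of y d h] l
      by (metis One_nat_def Suc_1 append_Cons append_Nil length_Cons list.size(3) not_less_eq_eq list.sel(1) nat.simps(3) nat_le_linear le_zero_eq append1_eq_conv Cons_eq_append_conv)
    moreover have "c < d" using \<open>y \<in> Tnodes d h\<close> calculation l by (auto simp: Tnodes_def validp_def)
    ultimately show ?thesis by auto
  qed
qed

lemma nbr_T: "x \<in> Tnodes d h \<Longrightarrow> x \<notin> Lnodes d \<Longrightarrow> {y. El d h x y} \<subseteq> insert (butlast x) ((\<lambda>c. x@[c]) ` {..<2*d-1})"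
proof
  fix y assume x: "x \<in> Tnodes d h" "x \<notin> Lnodes d" and y: "y \<in> {y. El d h x y}"
  then obtain l p where lp: "x = 1#l#p" "l < d" "length p \<le> h-1" "validp d p" by (auto simp: Tnodes_def)
  have pne: "p \<noteq> []" using x lp by (auto simp: Lnodes_def)
  have "y \<in> Tnodes d h" "\<exists>c. y = x@[c] \<or> x = y@[c]" using y x Rn_Tn_disj by (auto simp: El_def)
  then obtain c where c: "y = x@[c] \<or> x = y@[c]" by blast
  show "y \<in> insert (butlast x) ((\<lambda>c. x@[c]) ` {..<2*d-1})"
  proof (cases "x = y@[c]")
    case True then show ?thesis by simp
  next
    case False
    then have yx: "y = 1#l#(p@[c])" using c lp by simp
    then have "validp d (p@[c])" using \<open>y \<in> Tnodes d h\<close> by (auto simp: Tnodes_def)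
    then have "c < 2*d-1" using pne by (auto simp: validp_def)
    then show ?thesis using yx lp by auto
  qed
qed

lemma deg_Vl: "d \<ge> 1 \<Longrightarrow> x \<in> Vl d h \<Longrightarrow> card {y. El d h x y} \<le> 2*d"
proof -
  assume d1: "d \<ge> 1" and xV: "x \<in> Vl d h"
  have fR: "finite (Rnodes d)" and fL: "finite (Lnodes d)"
    using finite_Vl[of d h] Ln_sub[of 1 d] finite_Vl[of d 1]
    by (auto simp: Vl_def intro: finite_subset)
  show ?thesis
  proof (cases "x \<in> Rnodes d")
    case True
    then have "card {y. El d h x y} \<le> card (Lnodes d)" using nbr_Rn fL card_mono by metis
    then show ?thesis using card_Ln[of d] by simp
  next
    case nR: False
    show ?thesis
    proof (cases "x \<in> Lnodes d")
      case True
      have "card {y. El d h x y} \<le> card (Rnodes d \<union> (\<lambda>c. x@[c]) ` {..<d})"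
        using nbr_L[OF True] fR by (intro card_mono) auto
      also have "\<dots> \<le> card (Rnodes d) + card ((\<lambda>c. x@[c]) ` {..<d})" by (rule card_Un_le)
      also have "\<dots> \<le> d + d" using card_Rn[of d] card_image_le[of "{..<d}" "\<lambda>c. x@[c]"] by simp
      finally show ?thesis by simp
    next
      case False
      have xT: "x \<in> Tnodes d h" using xV nR by (simp add: Vl_def)
      have "card {y. El d h x y} \<le> card (insert (butlast x) ((\<lambda>c. x@[c]) ` {..<2*d-1}))"
        using nbr_T[OF xT False] by (intro card_mono) auto
      also have "\<dots> \<le> Suc (card ((\<lambda>c. x@[c]) ` {..<2*d-1}))" by (rule card_insert_le_m1) auto
      also have "\<dots> \<le> Suc (2*d-1)" using card_image_le[of "{..<2*d-1}" "\<lambda>c. x@[c]"] by simp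
      finally show ?thesis using d1 by simp
    qed
  qed
qed

lemma nbr_nat: "h \<ge> 1 \<Longrightarrow> {u \<in> Vn d h. En d h (to_nat x) u} = to_nat ` {y. El d h x y}"
  using El_V by (auto simp: Vn_def En_def)

lemma network_Vn: assumes h: "h \<ge> 1" shows "network (Vn d h) (En d h)"
proof -
  have A: "\<forall>u w. En d h u w \<longrightarrow> u \<in> Vn d h \<and> w \<in> Vn d h \<and> u \<noteq> w \<and> En d h w u"
  proof (intro allI impI)
    fix u w assume "En d h u w"
    then obtain x y where xy: "u = to_nat x" "w = to_nat y" "El d h x y" by (auto simp: En_def)
    then show "u \<in> Vn d h \<and> w \<in> Vn d h \<and> u \<noteq> w \<and> En d h w u"
      using El_V[OF h xy(3)] El_sym[OF xy(3)] by (auto simp: Vn_def En_def)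
  qed
  have "finite (Vn d h)" using finite_Vl by (simp add: Vn_def)
  then show ?thesis using A unfolding network_def by blast
qed

lemma maxdeg_Vn: "d \<ge> 1 \<Longrightarrow> h \<ge> 1 \<Longrightarrow> max_degree_le (Vn d h) (En d h) (2*d)"
  unfolding max_degree_le_def
proof -
  assume d1: "d \<ge> 1" and h: "h \<ge> 1"
  show "\<forall>v\<in>Vn d h. card {u \<in> Vn d h. En d h v u} \<le> 2*d"
  proof
    fix v assume "v \<in> Vn d h"
    then obtain x where x: "v = to_nat x" "x \<in> Vl d h" by (auto simp: Vn_def)
    have fin: "finite {y. El d h x y}"
      by (rule finite_subset[OF _ finite_Vl[of d h]]) (use El_V[OF h] in auto)
    have "card {u \<in> Vn d h. En d h v u} = card (to_nat ` {y. El d h x y})" using nbr_nat[OF h] x by simp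
    also have "\<dots> \<le> card {y. El d h x y}" by (rule card_image_le[OF fin])
    also have "\<dots> \<le> 2*d" by (rule deg_Vl[OF d1 x(2)])
    finally show "card {u \<in> Vn d h. En d h v u} \<le> 2*d" .
  qed
qed

lemma prefix_Tn: "1#l#(p@[c]) \<in> Tnodes d h \<Longrightarrow> 1#l#p \<in> Tnodes d h"
  by (cases p) (auto simp: Tnodes_def validp_def)

lemma walk_up: "1#l#p \<in> Tnodes d h \<Longrightarrow> (to_nat (1#l#p), to_nat [1,l]) \<in> {(a,b). En d h a b} ^^ (length p)"
proof (induction p rule: rev_induct)
  case Nil then show ?case by simp
next
  case (snoc c p)
  have p: "1#l#p \<in> Tnodes d h" using prefix_Tn snoc.prems by simp
  have "El d h (1#l#(p@[c])) (1#l#p)" using p snoc.prems by (auto simp: El_def)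
  then have "(to_nat (1#l#(p@[c])), to_nat (1#l#p)) \<in> {(a,b). En d h a b}" by (simp add: En_iff)
  from relpow_Suc_I2[OF this snoc.IH[OF p]]
  show ?case by (metis length_append_singleton)
qed

lemma within_Lf: "h \<ge> 2 \<Longrightarrow> x \<in> Lf d h \<Longrightarrow> r < d \<Longrightarrow> within_dist (En d h) h (to_nat x) (to_nat [0,r])"
proof -
  assume h: "h \<ge> 2" and x: "x \<in> Lf d h" and r: "r < d"
  then obtain l c q where lcq: "x = 1#l#c#q" "l < d" "length q = h-2" by (auto simp: Lf_def)
  have xT: "x \<in> Tnodes d h" using Lf_sub[OF h] x by auto
  have w0: "(to_nat (1#l#(c#q)), to_nat [1,l]) \<in> {(a,b). En d h a b} ^^ length (c#q)"
    by (rule walk_up) (use xT lcq(1) in simp)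
  have len: "length (c#q) = h-1" using lcq h by simp
  have w: "(to_nat x, to_nat [1,l]) \<in> {(a,b). En d h a b} ^^ (h-1)"
    using w0 unfolding len lcq(1) .
  have "El d h [1,l] [0,r]" using lcq r by (auto simp: El_def Lnodes_def Rnodes_def)
  then have "(to_nat [1,l], to_nat [0,r]) \<in> {(a,b). En d h a b}" by (simp add: En_iff)
  then have "(to_nat x, to_nat [0,r]) \<in> {(a,b). En d h a b} ^^ Suc (h-1)"
    using w by (rule relpow_Suc_I[rotated])
  then show ?thesis using h unfolding within_dist_def by (intro exI[of _ "Suc (h-1)"]) auto
qed

lemma Y_nbr: "h \<ge> 1 \<Longrightarrow> \<forall>y\<in>to_nat ` Rnodes d. \<forall>u\<in>Vn d h. En d h y u \<longleftrightarrow> u \<in> to_nat ` Lnodes d"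
  using Ln_sub[of h d] by (auto simp: En_def El_def Vn_def Vl_def Rnodes_def Lnodes_def Tnodes_def)



lemma card_Vn_eq: "card (Vn d h) = card (Vl d h)"
  unfolding Vn_def by (rule card_image) (meson inj_on_subset inj_to_nat subset_UNIV)

lemma card_Rnodes: "card (Rnodes d) = d"
proof -
  have "Rnodes d = (\<lambda>r. [0,r]) ` {..<d}" by (auto simp: Rnodes_def)
  moreover have "inj_on (\<lambda>r::nat. [0,r]) {..<d}" by (auto simp: inj_on_def)
  ultimately show ?thesis by (simp add: card_image)
qed

lemma card_Vn_bounds:
  assumes d: "d \<ge> 1" and h: "h \<ge> 2"
  shows "real d ^ h \<le> real (card (Vn d h))" "real (card (Vn d h)) \<le> real (h+1) * real (2*d) ^ h"
proof -
  obtain k where hk: "h = Suc (Suc k)" using h by (cases h; cases "h - 1") auto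
  have "d ^ h = d * (d * d ^ (h-2))" using hk by simp
  also have "\<dots> \<le> d * (d * (2*d-1) ^ (h-2))" using d by (intro mult_le_mono2 power_mono) auto
  also have "\<dots> = card (Lf d h)" by (simp add: card_Lf)
  also have "\<dots> \<le> card (Vl d h)" using Lf_sub[OF h] finite_Vl[of d h]
    by (intro card_mono) (auto simp: Vl_def)
  finally have "d ^ h \<le> card (Vn d h)" by (simp add: card_Vn_eq)
  then show "real d ^ h \<le> real (card (Vn d h))"
    by (simp only: of_nat_power[symmetric] of_nat_le_iff)
  have "card (Vl d h) \<le> card (Rnodes d) + card (Tnodes d h)" unfolding Vl_def by (rule card_Un_le)
  also have "\<dots> \<le> d + d * (h * (2*d)^(h-1))" using card_Rnodes[of d] card_Tn[OF d] h by simp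
  also have "\<dots> \<le> (h+1) * (2*d)^h"
  proof -
    have "2*d \<le> (2*d)^h" using h d by (intro self_le_power) auto
    then have a: "d \<le> (2*d)^h" by simp
    have "(2*d)^h = (2*d) * (2*d)^(h-1)" using hk by simp
    then have "d * (2*d)^(h-1) \<le> (2*d)^h" by simp
    then have "h * (d * (2*d)^(h-1)) \<le> h * (2*d)^h" by (rule mult_le_mono2)
    then have b: "d * (h * (2*d)^(h-1)) \<le> h * (2*d)^h" by (simp add: ac_simps)
    have "d + d * (h * (2*d)^(h-1)) \<le> (2*d)^h + h * (2*d)^h" by (rule add_le_mono[OF a b])
    also have "\<dots> = (h+1) * (2*d)^h" by (simp only: add_mult_distrib mult_1 add.commute)
    finally show ?thesis .
  qed
  finally have "card (Vn d h) \<le> (h+1) * (2*d)^h" by (simp add: card_Vn_eq)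
  then have "real (card (Vn d h)) \<le> real ((h+1) * (2*d)^h)" by (simp only: of_nat_le_iff)
  then show "real (card (Vn d h)) \<le> real (h+1) * real (2*d) ^ h" by (simp add: distrib_right)
qed

lemma final_num:
  fixes K :: real
  assumes "real T \<le> K / 2" "K \<le> real N"
  shows "(2::real) ^ T / real ((2::nat) ^ N) \<le> 2 powr (- (K / 2))"
proof -
  have "(2::real) ^ T / real ((2::nat) ^ N) = 2 powr (real T - real N)"
    by (simp add: powr_diff powr_realpow)
  also have "\<dots> \<le> 2 powr (- (K / 2))" using assms by (intro powr_mono) auto
  finally show ?thesis .
qed

lemma card_G: "finite P \<Longrightarrow> card (PiE P (\<lambda>_. {xs :: bool list. length xs = B})) = 2 ^ (B * card P)"
  by (simp add: card_PiE card_bool_lists power_mult)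

lemma G_ne: "PiE P (\<lambda>_. {xs :: bool list. length xs = B}) \<noteq> {}"
  by (simp add: PiE_eq_empty_iff) (metis length_replicate)

lemma Src_Y_disj: "to_nat ` Lf d h \<inter> to_nat ` Rnodes d = {}"
  by (auto simp: Lf_def Rnodes_def)



lemma common_facts:
  assumes h: "h \<ge> 2" and d1: "d \<ge> 1"
  shows "network (Vn d h) (En d h)" "max_degree_le (Vn d h) (En d h) (2*d)"
    "to_nat ` Lf d h \<subseteq> Vn d h" "to_nat ` Rnodes d \<subseteq> Vn d h" "to_nat ` Lnodes d \<subseteq> Vn d h"
    "\<forall>y\<in>to_nat ` Rnodes d. \<forall>u\<in>Vn d h. En d h y u \<longleftrightarrow> u \<in> to_nat ` Lnodes d"
    "\<And>u w. u \<in> to_nat ` Lf d h \<Longrightarrow> w \<in> to_nat ` Rnodes d \<Longrightarrow> u \<noteq> w \<and> within_dist (En d h) h u w"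
    "finite (to_nat ` Lf d h)" "finite (to_nat ` Rnodes d)"
    "card (to_nat ` Lf d h) = d * (d * (2*d-1)^(h-2))" "card (to_nat ` Rnodes d) = d"
proof -
  have h1: "h \<ge> 1" using h by simp
  show "network (Vn d h) (En d h)" by (rule network_Vn[OF h1])
  show "max_degree_le (Vn d h) (En d h) (2*d)" by (rule maxdeg_Vn[OF d1 h1])
  show "to_nat ` Lf d h \<subseteq> Vn d h" using Lf_sub[OF h] by (auto simp: Vn_def Vl_def)
  show "to_nat ` Rnodes d \<subseteq> Vn d h" by (auto simp: Vn_def Vl_def)
  show "to_nat ` Lnodes d \<subseteq> Vn d h" using Ln_sub[OF h1] by (auto simp: Vn_def Vl_def)
  show "\<forall>y\<in>to_nat ` Rnodes d. \<forall>u\<in>Vn d h. En d h y u \<longleftrightarrow> u \<in> to_nat ` Lnodes d"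
    by (rule Y_nbr[OF h1])
  show "u \<noteq> w \<and> within_dist (En d h) h u w" if uL: "u \<in> to_nat ` Lf d h" and wR: "w \<in> to_nat ` Rnodes d" for u w
  proof -
    obtain x where x: "u = to_nat x" "x \<in> Lf d h" using uL by blast
    obtain y where y: "w = to_nat y" "y \<in> Rnodes d" using wR by blast
    obtain r where "y = [0,r]" "r < d" using y(2) by (auto simp: Rnodes_def)
    then have "u = to_nat x" "x \<in> Lf d h" "w = to_nat [0,r]" "r < d" using x y by auto
    then show ?thesis using within_Lf[OF h] Src_Y_disj[of d h] uL wR by auto
  qed
  have inj: "inj_on to_nat A" for A :: "nat list set" by (meson inj_on_subset inj_to_nat subset_UNIV)
  have fL: "finite (Lf d h)" unfolding Lf_def by (auto intro!: finite_imageI finite_lists_length_eq)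
  show "finite (to_nat ` Lf d h)" using fL by simp
  show "finite (to_nat ` Rnodes d)" using finite_Vl[of d h] by (auto simp: Vl_def intro: finite_subset)
  show "card (to_nat ` Lf d h) = d * (d * (2*d-1)^(h-2))" by (simp add: card_image[OF inj] card_Lf)
  show "card (to_nat ` Rnodes d) = d" by (simp add: card_image[OF inj] card_Rnodes)
qed

lemma part1:
  assumes h: "h \<ge> 2" and B: "B \<ge> 1" and D: "D \<ge> 2" "even D"
  shows "let K = real B * real (D - 1) ^ (h - 2) * (real D / 2) ^ 3 in
          \<exists>V E P. network V E \<and> max_degree_le V E D \<and>
            (1 / 2 ^ h) * real D ^ h \<le> real (card V) \<and> real (card V) \<le> real (h+1) * real D ^ h \<and>
            sim_pairs_ok V E h P \<and>
            (\<forall>(A :: (nat \<Rightarrow> bool list, nat \<Rightarrow> bool list) beep_alg) (T :: nat).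
               real T \<le> K / 2 \<longrightarrow>
               (\<exists>m. (\<forall>(u, w)\<in>P. length (m u w) \<le> B) \<and>
                    success_prob A V E (sim_input P m) T (sim_correct P m)
                      \<le> 2 powr (- (K / 2))))"
proof -
  define d where "d = D div 2"
  have Dd: "D = 2*d" using D by (simp add: d_def)
  have d1: "d \<ge> 1" using D Dd by simp
  define K where "K = real B * real (D - 1) ^ (h - 2) * (real D / 2) ^ 3"
  define V where "V = Vn d h"
  define E where "E = En d h"
  define Y where "Y = to_nat ` Rnodes d"
  define Src where "Src = to_nat ` Lf d h"
  define P where "P = Src \<times> Y"
  note cf = common_facts[OF h d1, folded V_def E_def Y_def Src_def]
  have finP: "finite P" using cf by (simp add: P_def)
  have cardP: "card P = d * (d * (2*d-1)^(h-2)) * d" using cf by (simp add: P_def card_cartesian_product)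
  define N where "N = B * card P"
  have KN: "K \<le> real N"
    by (simp add: K_def N_def cardP Dd power3_eq_cube)
  have disj: "Src \<inter> Y = {}" using Src_Y_disj by (simp add: Src_def Y_def)
  have main: "\<forall>(A :: (nat \<Rightarrow> bool list, nat \<Rightarrow> bool list) beep_alg) (T :: nat).
               real T \<le> K / 2 \<longrightarrow>
               (\<exists>m. (\<forall>(u, w)\<in>P. length (m u w) \<le> B) \<and>
                    success_prob A V E (sim_input P m) T (sim_correct P m)
                      \<le> 2 powr (- (K / 2)))"
  proof (intro allI impI)
    fix A :: "(nat \<Rightarrow> bool list, nat \<Rightarrow> bool list) beep_alg" and T :: nat
    assume T: "real T \<le> K / 2"
    define G where "G = PiE P (\<lambda>_. {xs :: bool list. length xs = B})"
    define mg where "mg g = (\<lambda>u w. if (u,w) \<in> P then g (u,w) else [])" for g :: "nat \<times> nat \<Rightarrow> bool list"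
    have "\<exists>g\<in>G. success_prob A V E (sim_input P (mg g)) T (sim_correct P (mg g)) \<le> 2 ^ T / card G"
    proof (rule main_bound[where Y=Y and S="to_nat ` Lnodes d"])
      show "finite G" unfolding G_def using finP by (auto intro!: finite_PiE finite_bool_lists)
      show "G \<noteq> {}" unfolding G_def by (rule G_ne)
      show "\<forall>y\<in>Y. \<forall>u\<in>V. E y u \<longleftrightarrow> u \<in> to_nat ` Lnodes d" using cf by simp
      show "to_nat ` Lnodes d \<subseteq> V" using cf by simp
      show "\<forall>g\<in>G. \<forall>g'\<in>G. \<forall>y\<in>Y. sim_input P (mg g) y = sim_input P (mg g') y"
      proof (intro ballI)
        fix g g' y assume "y \<in> Y"
        then have "y \<notin> Src" using disj by blast
        then show "sim_input P (mg g) y = sim_input P (mg g') y" by (simp add: sim_input_def P_def)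
      qed
      show "\<forall>g\<in>G. \<forall>g'\<in>G. \<forall>out out'. sim_correct P (mg g) out \<longrightarrow> sim_correct P (mg g') out' \<longrightarrow>
              (\<forall>y\<in>Y. out y = out' y) \<longrightarrow> g = g'"
      proof (intro ballI allI impI)
        fix g g' out out' assume g: "g \<in> G" and g': "g' \<in> G"
          and c: "sim_correct P (mg g) out" and c': "sim_correct P (mg g') out'"
          and eq: "\<forall>y\<in>Y. out y = out' y"
        show "g = g'"
        proof (rule PiE_ext[OF g[unfolded G_def] g'[unfolded G_def]])
          fix i assume i: "i \<in> P"
          obtain u w where uw: "i = (u,w)" by fastforce
          have wY: "w \<in> Y" using i uw by (simp add: P_def)
          have "out w u = g (u,w)" using c i uw by (auto simp: sim_correct_def mg_def)
          moreover have "out' w u = g' (u,w)" using c' i uw by (auto simp: sim_correct_def mg_def)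
          ultimately show "g i = g' i" using eq wY uw by simp
        qed
      qed
    qed
    then obtain g where g: "g \<in> G"
      and pr: "success_prob A V E (sim_input P (mg g)) T (sim_correct P (mg g)) \<le> 2 ^ T / card G" by blast
    have cG: "card G = 2 ^ N" unfolding G_def N_def using card_G[OF finP] by simp
    have "2 ^ T / real (card G) \<le> 2 powr (- (K / 2))" unfolding cG by (rule final_num[OF T KN])
    moreover have "\<forall>(u, w)\<in>P. length (mg g u w) \<le> B" using g by (auto simp: mg_def G_def PiE_def Pi_def)
    ultimately show "\<exists>m. (\<forall>(u, w)\<in>P. length (m u w) \<le> B) \<and>
                    success_prob A V E (sim_input P m) T (sim_correct P m) \<le> 2 powr (- (K / 2))"
      using pr by (intro exI[of _ "mg g"]) auto
  qed
  have spo: "sim_pairs_ok V E h P" unfolding sim_pairs_ok_def P_def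
    using cf by (auto simp: E_def)
  have cb: "(1 / 2 ^ h) * real D ^ h \<le> real (card V)" "real (card V) \<le> real (h+1) * real D ^ h"
    using card_Vn_bounds[OF d1 h] by (auto simp: V_def Dd power_mult_distrib)
  have "\<exists>V E P. network V E \<and> max_degree_le V E D \<and>
            (1 / 2 ^ h) * real D ^ h \<le> real (card V) \<and> real (card V) \<le> real (h+1) * real D ^ h \<and>
            sim_pairs_ok V E h P \<and>
            (\<forall>(A :: (nat \<Rightarrow> bool list, nat \<Rightarrow> bool list) beep_alg) (T :: nat).
               real T \<le> K / 2 \<longrightarrow>
               (\<exists>m. (\<forall>(u, w)\<in>P. length (m u w) \<le> B) \<and>
                    success_prob A V E (sim_input P m) T (sim_correct P m)
                      \<le> 2 powr (- (K / 2))))"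
    using cf cb spo main Dd by blast
  then show ?thesis unfolding Let_def K_def .
qed


lemma part2:
  assumes h: "h \<ge> 2" and B: "B \<ge> 1" and D: "D \<ge> 2" "even D"
  shows "let K = real B * real (D - 1) ^ (h - 2) * (real D / 2) ^ 2 in
          \<exists>V E. network V E \<and> max_degree_le V E D \<and>
            (1 / 2 ^ h) * real D ^ h \<le> real (card V) \<and> real (card V) \<le> real (h+1) * real D ^ h \<and>
            (\<forall>(A :: (bool list, nat \<Rightarrow> bool list) beep_alg) (T :: nat).
               real T \<le> K / 2 \<longrightarrow>
               (\<exists>m. (\<forall>u\<in>V. length (m u) \<le> B) \<and>
                    success_prob A V E m T (lb_correct V E h m)
                      \<le> 2 powr (- (K / 2))))"
proof -
  define d where "d = D div 2"
  have Dd: "D = 2*d" using D by (simp add: d_def)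
  have d1: "d \<ge> 1" using D Dd by simp
  define K where "K = real B * real (D - 1) ^ (h - 2) * (real D / 2) ^ 2"
  define V where "V = Vn d h"
  define E where "E = En d h"
  define Y where "Y = to_nat ` Rnodes d"
  define Src where "Src = to_nat ` Lf d h"
  note cf = common_facts[OF h d1, folded V_def E_def Y_def Src_def]
  have finS: "finite Src" using cf by simp
  define N where "N = B * card Src"
  have KN: "K \<le> real N"
    using cf by (simp add: K_def N_def Dd power2_eq_square)
  have disj: "Src \<inter> Y = {}" using Src_Y_disj by (simp add: Src_def Y_def)
  have "[0,0] \<in> Rnodes d" using d1 by (auto simp: Rnodes_def)
  then have w0: "to_nat [0::nat,0] \<in> Y" by (simp add: Y_def)
  have main: "\<forall>(A :: (bool list, nat \<Rightarrow> bool list) beep_alg) (T :: nat).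
               real T \<le> K / 2 \<longrightarrow>
               (\<exists>m. (\<forall>u\<in>V. length (m u) \<le> B) \<and>
                    success_prob A V E m T (lb_correct V E h m)
                      \<le> 2 powr (- (K / 2)))"
  proof (intro allI impI)
    fix A :: "(bool list, nat \<Rightarrow> bool list) beep_alg" and T :: nat
    assume T: "real T \<le> K / 2"
    define G where "G = PiE Src (\<lambda>_. {xs :: bool list. length xs = B})"
    define mg where "mg g = (\<lambda>u. if u \<in> Src then g u else [])" for g :: "nat \<Rightarrow> bool list"
    have "\<exists>g\<in>G. success_prob A V E (mg g) T (lb_correct V E h (mg g)) \<le> 2 ^ T / card G"
    proof (rule main_bound[where Y=Y and S="to_nat ` Lnodes d"])
      show "finite G" unfolding G_def using finS by (auto intro!: finite_PiE finite_bool_lists)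
      show "G \<noteq> {}" unfolding G_def by (rule G_ne)
      show "\<forall>y\<in>Y. \<forall>u\<in>V. E y u \<longleftrightarrow> u \<in> to_nat ` Lnodes d" using cf by simp
      show "to_nat ` Lnodes d \<subseteq> V" using cf by simp
      show "\<forall>g\<in>G. \<forall>g'\<in>G. \<forall>y\<in>Y. mg g y = mg g' y"
      proof (intro ballI)
        fix g g' y assume "y \<in> Y"
        then have "y \<notin> Src" using disj by blast
        then show "mg g y = mg g' y" by (simp add: mg_def)
      qed
      show "\<forall>g\<in>G. \<forall>g'\<in>G. \<forall>out out'. lb_correct V E h (mg g) out \<longrightarrow> lb_correct V E h (mg g') out' \<longrightarrow>
              (\<forall>y\<in>Y. out y = out' y) \<longrightarrow> g = g'"
      proof (intro ballI allI impI)
        fix g g' out out' assume g: "g \<in> G" and g': "g' \<in> G"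
          and c: "lb_correct V E h (mg g) out" and c': "lb_correct V E h (mg g') out'"
          and eq: "\<forall>y\<in>Y. out y = out' y"
        show "g = g'"
        proof (rule PiE_ext[OF g[unfolded G_def] g'[unfolded G_def]])
          fix u assume u: "u \<in> Src"
          define w where "w = to_nat [0::nat,0]"
          have wY: "w \<in> Y" using w0 by (simp add: w_def)
          have uV: "u \<in> V" and wV: "w \<in> V" using u wY cf by auto
          have nd: "u \<noteq> w \<and> within_dist E h u w" using cf(7) u wY by simp
          have "out w u = g u" using c uV wV nd u by (auto simp: lb_correct_def mg_def)
          moreover have "out' w u = g' u" using c' uV wV nd u by (auto simp: lb_correct_def mg_def)
          ultimately show "g u = g' u" using eq wY by simp
        qed
      qed
    qed
    then obtain g where g: "g \<in> G"
      and pr: "success_prob A V E (mg g) T (lb_correct V E h (mg g)) \<le> 2 ^ T / card G" by blast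
    have cG: "card G = 2 ^ N" unfolding G_def N_def using card_G[OF finS] by simp
    have "2 ^ T / real (card G) \<le> 2 powr (- (K / 2))" unfolding cG by (rule final_num[OF T KN])
    moreover have "\<forall>u\<in>V. length (mg g u) \<le> B" using g by (auto simp: mg_def G_def PiE_def Pi_def)
    ultimately show "\<exists>m. (\<forall>u\<in>V. length (m u) \<le> B) \<and>
                    success_prob A V E m T (lb_correct V E h m) \<le> 2 powr (- (K / 2))"
      using pr by (intro exI[of _ "mg g"]) auto
  qed
  have cb: "(1 / 2 ^ h) * real D ^ h \<le> real (card V)" "real (card V) \<le> real (h+1) * real D ^ h"
    using card_Vn_bounds[OF d1 h] by (auto simp: V_def Dd power_mult_distrib)
  have "\<exists>V E. network V E \<and> max_degree_le V E D \<and>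
            (1 / 2 ^ h) * real D ^ h \<le> real (card V) \<and> real (card V) \<le> real (h+1) * real D ^ h \<and>
            (\<forall>(A :: (bool list, nat \<Rightarrow> bool list) beep_alg) (T :: nat).
               real T \<le> K / 2 \<longrightarrow>
               (\<exists>m. (\<forall>u\<in>V. length (m u) \<le> B) \<and>
                    success_prob A V E m T (lb_correct V E h m)
                      \<le> 2 powr (- (K / 2))))"
    using cf cb main Dd by blast
  then show ?thesis unfolding Let_def K_def .
qed

theorem theorem7:
  fixes h :: nat
  assumes "h \<ge> 2"
  shows
    "(\<exists>c1 c2 :: real. c1 > 0 \<and> c2 > 0 \<and>
       (\<forall>B D :: nat. B \<ge> 1 \<longrightarrow> D \<ge> 2 \<longrightarrow> even D \<longrightarrow>
         (let K = real B * real (D - 1) ^ (h - 2) * (real D / 2) ^ 3 in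
          \<exists>V E P. network V E \<and> max_degree_le V E D \<and>
            c1 * real D ^ h \<le> real (card V) \<and> real (card V) \<le> c2 * real D ^ h \<and>
            sim_pairs_ok V E h P \<and>
            (\<forall>(A :: (nat \<Rightarrow> bool list, nat \<Rightarrow> bool list) beep_alg) (T :: nat).
               real T \<le> K / 2 \<longrightarrow>
               (\<exists>m. (\<forall>(u, w)\<in>P. length (m u w) \<le> B) \<and>
                    success_prob A V E (sim_input P m) T (sim_correct P m)
                      \<le> 2 powr (- (K / 2)))))))
   \<and>
    (\<exists>c1 c2 :: real. c1 > 0 \<and> c2 > 0 \<and>
       (\<forall>B D :: nat. B \<ge> 1 \<longrightarrow> D \<ge> 2 \<longrightarrow> even D \<longrightarrow>
         (let K = real B * real (D - 1) ^ (h - 2) * (real D / 2) ^ 2 in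
          \<exists>V E. network V E \<and> max_degree_le V E D \<and>
            c1 * real D ^ h \<le> real (card V) \<and> real (card V) \<le> c2 * real D ^ h \<and>
            (\<forall>(A :: (bool list, nat \<Rightarrow> bool list) beep_alg) (T :: nat).
               real T \<le> K / 2 \<longrightarrow>
               (\<exists>m. (\<forall>u\<in>V. length (m u) \<le> B) \<and>
                    success_prob A V E m T (lb_correct V E h m)
                      \<le> 2 powr (- (K / 2)))))))"
proof (rule conjI)
  have pos: "(1 / 2 ^ h :: real) > 0" "real (h+1) > 0" by auto
  show "\<exists>c1 c2 :: real. c1 > 0 \<and> c2 > 0 \<and>
       (\<forall>B D :: nat. B \<ge> 1 \<longrightarrow> D \<ge> 2 \<longrightarrow> even D \<longrightarrow>
         (let K = real B * real (D - 1) ^ (h - 2) * (real D / 2) ^ 3 in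
          \<exists>V E P. network V E \<and> max_degree_le V E D \<and>
            c1 * real D ^ h \<le> real (card V) \<and> real (card V) \<le> c2 * real D ^ h \<and>
            sim_pairs_ok V E h P \<and>
            (\<forall>(A :: (nat \<Rightarrow> bool list, nat \<Rightarrow> bool list) beep_alg) (T :: nat).
               real T \<le> K / 2 \<longrightarrow>
               (\<exists>m. (\<forall>(u, w)\<in>P. length (m u w) \<le> B) \<and>
                    success_prob A V E (sim_input P m) T (sim_correct P m)
                      \<le> 2 powr (- (K / 2))))))"
    using part1[OF assms] pos by blast
  show "\<exists>c1 c2 :: real. c1 > 0 \<and> c2 > 0 \<and>
       (\<forall>B D :: nat. B \<ge> 1 \<longrightarrow> D \<ge> 2 \<longrightarrow> even D \<longrightarrow>
         (let K = real B * real (D - 1) ^ (h - 2) * (real D / 2) ^ 2 in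
          \<exists>V E. network V E \<and> max_degree_le V E D \<and>
            c1 * real D ^ h \<le> real (card V) \<and> real (card V) \<le> c2 * real D ^ h \<and>
            (\<forall>(A :: (bool list, nat \<Rightarrow> bool list) beep_alg) (T :: nat).
               real T \<le> K / 2 \<longrightarrow>
               (\<exists>m. (\<forall>u\<in>V. length (m u) \<le> B) \<and>
                    success_prob A V E m T (lb_correct V E h m)
                      \<le> 2 powr (- (K / 2))))))"
    using part2[OF assms] pos by blast
qed


end
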